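(* For every index $\mathbf k$ of depth $r$, \[\sum_{i=0}^{r}(-1)^i\,\zeta^{t,*}_{\mathrm{shift}}(\overleftarrow{\mathbf k_{[i]}};T)\,\zeta^{t,\star,*}_{\mathrm{shift}}(\mathbf k^{[i]};T)=\delta_{0,r},\] where $\delta$ is Kronecker's delta.
   Context: $t,T$ are commuting indeterminates. An index is a finite tuple $\mathbf{k}=(k_1,\dots,k_r)$ of positive integers ($r\ge0$), $\mathrm{dep}(\mathbf k)=r$, $\mathrm{wt}(\mathbf k)=\sum k_i$; $\mathbf{k}_{[i]}=(k_1,\dots,k_i)$, $\mathbf{k}^{[i]}=(k_{i+1},\dots,k_r)$, $\overleftarrow{\mathbf{k}}=(k_r,\dots,k_1)$; $\oplus$ is componentwise sum and $b\binom{\mathbf{k}}{\mathbf{l}}=\prod_{i}\binom{k_i+l_i-1}{l_i}$. $\zeta^*(\mathbf k;T)$ is the harmonic regularized polynomial: with $\mathfrak H=\mathbb Q\langle e_0,e_1\rangle$, $e_{\mathbf{k}}=e_1e_0^{k_1-1}\cdots e_1e_0^{k_r-1}$, $Z^*_T$ the unique $\mathbb Q$-algebra homomorphism $(\mathbb Q+e_1\mathfrak H,* )\to\mathbb R[T]$ (harmonic product $*$) with $Z^*_T(e_{\mathbf k})=(-1)^{\mathrm{dep}}\zeta(\mathbf k)$ for admissible $\mathbf k$ (empty or $k_r\ge2$, $\zeta$ the MZV) and $Z^*_T(e_1)=-T$, $\zeta^*(\mathbf k;T)=(-1)^{\mathrm{dep}(\mathbf k)}Z^*_T(e_{\mathbf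 k})$. $\zeta^{t,*}_{\mathrm{shift}}(\mathbf{k};T)=\sum_{\mathbf n\in\mathbb Z_{\ge0}^{\mathrm{dep}(\mathbf k)}}b\binom{\mathbf k}{\mathbf n}\zeta^{*}(\mathbf k\oplus\mathbf n;T)(-t)^{\mathrm{wt}(\mathbf n)}$. $\mathbf l\preceq\mathbf k$ means $\mathbf l$ is obtained from $(k_1\circ\cdots\circ k_r)$ by replacing each $\circ$ by a comma or a plus sign ($\varnothing\preceq\varnothing$), and $\zeta^{t,\star,*}_{\mathrm{shift}}(\mathbf k;T)=\sum_{\mathbf l\preceq\mathbf k}\zeta^{t,*}_{\mathrm{shift}}(\mathbf l;T)$. *)

theory Defs
  imports "HOL-Analysis.Analysis" "HOL-Computational_Algebra.Polynomial"
    "HOL-Computational_Algebra.Formal_Power_Series"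
begin

definition is_index :: "nat list \<Rightarrow> bool" where
  "is_index k \<longleftrightarrow> (\<forall>x\<in>set k. 0 < x)"

definition admissible :: "nat list \<Rightarrow> bool" where
  "admissible k \<longleftrightarrow> is_index k \<and> (k = [] \<or> 2 \<le> last k)"

definition mzv :: "nat list \<Rightarrow> real" where
  "mzv k = (\<Sum>\<^sub>\<infinity>n\<in>{n :: nat list. length n = length k \<and> sorted_wrt (<) n \<and> (\<forall>x\<in>set n. 0 < x)}.
              \<Prod>i<length k. 1 / real (n ! i) ^ (k ! i))"

text \<open>Harmonic (stuffle) product of indices, as the list of resulting indices with multiplicity.\<close>
fun stuffle :: "nat list \<Rightarrow> nat list \<Rightarrow> nat list list" where
  "stuffle [] l = [l]"
| "stuffle k [] = [k]"
| "stuffle (a # k) (b # l) =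
     map ((#) a) (stuffle k (b # l)) @ map ((#) b) (stuffle (a # k) l) @ map ((#) (a + b)) (stuffle k l)"

text \<open>Values on non-indices are fixed to 0 to make it unique.\<close>
definition zeta_star_reg :: "nat list \<Rightarrow> real poly" where
  "zeta_star_reg = (THE f.
     (\<forall>k l. is_index k \<longrightarrow> is_index l \<longrightarrow> f k * f l = sum_list (map f (stuffle k l))) \<and>
     (\<forall>k. admissible k \<longrightarrow> f k = [:mzv k:]) \<and>
     f [1] = [:0, 1:] \<and>
     (\<forall>k. \<not> is_index k \<longrightarrow> f k = 0))"

definition bcoef :: "nat list \<Rightarrow> nat list \<Rightarrow> nat" where
  "bcoef k n = (\<Prod>i<length k. (k ! i + n ! i - 1) choose (n ! i))"

definition vadd :: "nat list \<Rightarrow> nat list \<Rightarrow> nat list" where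
  "vadd k n = map2 (+) k n"

text \<open>zeta^{t,*}_shift(k;T) as a formal power series in t over R[T].\<close>
definition zeta_shift :: "nat list \<Rightarrow> real poly fps" where
  "zeta_shift k = Abs_fps (\<lambda>m. \<Sum>n\<in>{n :: nat list. length n = length k \<and> sum_list n = m}.
       of_nat (bcoef k n) * zeta_star_reg (vadd k n) * (-1) ^ m)"

fun coarsenings :: "nat list \<Rightarrow> nat list list" where
  "coarsenings [] = [[]]"
| "coarsenings [a] = [[a]]"
| "coarsenings (a # b # k) =
     map ((#) a) (coarsenings (b # k)) @ map (\<lambda>l. (a + hd l) # tl l) (coarsenings (b # k))"

definition zeta_star_shift :: "nat list \<Rightarrow> real poly fps" where
  "zeta_star_shift k = sum_list (map zeta_shift (coarsenings k))"

end

theory Submission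
  imports Defs
begin


fun Zs :: "(nat \<Rightarrow> nat \<Rightarrow> 'a::comm_ring_1) \<Rightarrow> nat \<Rightarrow> nat \<Rightarrow> nat list \<Rightarrow> 'a" where
  "Zs S N lo [] = 1"
| "Zs S N lo (a # k) = (\<Sum>\<nu>\<in>{lo..N}. S a \<nu> * Zs S N (Suc \<nu>) k)"

fun Zw :: "(nat \<Rightarrow> nat \<Rightarrow> 'a::comm_ring_1) \<Rightarrow> nat \<Rightarrow> nat \<Rightarrow> nat list \<Rightarrow> 'a" where
  "Zw S N lo [] = 1"
| "Zw S N lo (a # k) = (\<Sum>\<nu>\<in>{lo..N}. S a \<nu> * Zw S N \<nu> k)"

lemma Zs_step: "lo \<le> N \<Longrightarrow> Zs S N lo (c # l) = S c lo * Zs S N (Suc lo) l + Zs S N (Suc lo) (c # l)"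
  by (simp add: sum.atLeast_Suc_atMost)

lemma Zw_step: "lo \<le> N \<Longrightarrow> Zw S N lo (c # l) = S c lo * Zw S N lo l + Zw S N (Suc lo) (c # l)"
  by (simp add: sum.atLeast_Suc_atMost)

lemma Zs_big: "N < lo \<Longrightarrow> Zs S N lo (c # l) = 0"
  by simp

lemma Zw_big: "N < lo \<Longrightarrow> Zw S N lo (c # l) = 0"
  by simp

lemma sum_list_map_sum_swap:
  "sum_list (map (\<lambda>x. sum (f x) A) xs) = sum (\<lambda>a. sum_list (map (\<lambda>x. f x a) xs)) A"
  by (induction xs) (auto simp: sum.distrib)

lemma coarsenings_nonempty: "l \<in> set (coarsenings (b # k)) \<Longrightarrow> l \<noteq> []"
  by (induction "b # k" arbitrary: b k rule: coarsenings.induct) auto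

lemma coarsening_identity:
  assumes mult: "\<And>a b \<nu>. S (a + b) \<nu> = S a \<nu> * S b \<nu>"
  shows "sum_list (map (Zs S N lo) (coarsenings k)) = Zw S N lo k"
proof (induction k arbitrary: lo rule: coarsenings.induct)
  case 1 then show ?case by simp
next
  case (2 a) then show ?case by simp
next
  case (3 a b k)
  let ?C = "coarsenings (b # k)"
  have key: "Zs S N lo (a # l) + Zs S N lo ((a + hd l) # tl l) = (\<Sum>\<nu>\<in>{lo..N}. S a \<nu> * Zs S N \<nu> l)"
    if "l \<in> set ?C" for l
  proof -
    from coarsenings_nonempty[OF that] obtain c l' where l: "l = c # l'" by (cases l) auto
    have "Zs S N lo (a # l) + Zs S N lo ((a + hd l) # tl l) =
          (\<Sum>\<nu>\<in>{lo..N}. S a \<nu> * (Zs S N (Suc \<nu>) l + S c \<nu> * Zs S N (Suc \<nu>) l'))"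
      by (simp add: l mult sum.distrib algebra_simps)
    also have "\<dots> = (\<Sum>\<nu>\<in>{lo..N}. S a \<nu> * Zs S N \<nu> l)"
      by (intro sum.cong refl) (auto simp: l sum.atLeast_Suc_atMost algebra_simps)
    finally show ?thesis .
  qed
  have "sum_list (map (Zs S N lo) (coarsenings (a # b # k))) =
        sum_list (map (\<lambda>l. Zs S N lo (a # l) + Zs S N lo ((a + hd l) # tl l)) ?C)"
    by (simp add: o_def sum_list_addf)
  also have "\<dots> = sum_list (map (\<lambda>l. \<Sum>\<nu>\<in>{lo..N}. S a \<nu> * Zs S N \<nu> l) ?C)"
    by (intro arg_cong[where f = sum_list] map_cong refl key)
  also have "\<dots> = (\<Sum>\<nu>\<in>{lo..N}. S a \<nu> * sum_list (map (Zs S N \<nu>) ?C))"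
    by (simp add: sum_list_map_sum_swap sum_list_const_mult)
  also have "\<dots> = Zw S N lo (a # b # k)"
    using 3 by simp
  finally show ?case .
qed

lemma split_prod_lemma:
  "Zs S N lo (a # x) * Zw S N lo (b # y) =
     (\<Sum>\<nu>\<in>{lo..N}. S a \<nu> * Zs S N (Suc \<nu>) x * Zw S N \<nu> (b # y)) +
     (\<Sum>\<nu>\<in>{lo..N}. S b \<nu> * Zs S N (Suc \<nu>) (a # x) * Zw S N \<nu> y)"
proof (induction "Suc N - lo" arbitrary: lo)
  case 0 then show ?case by simp
next
  case (Suc d)
  then have lo: "lo \<le> N" and d: "d = Suc N - Suc lo" by auto
  note IH = Suc(1)[OF d]
  have "Zs S N lo (a # x) * Zw S N lo (b # y) =
        (S a lo * Zs S N (Suc lo) x + Zs S N (Suc lo) (a # x)) * Zw S N lo (b # y)"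
    using lo by (simp only: Zs_step)
  also have "\<dots> = S a lo * Zs S N (Suc lo) x * Zw S N lo (b # y) +
       Zs S N (Suc lo) (a # x) * (S b lo * Zw S N lo y + Zw S N (Suc lo) (b # y))"
    using lo by (simp only: Zw_step[OF lo] algebra_simps)
  also have "\<dots> = S a lo * Zs S N (Suc lo) x * Zw S N lo (b # y) +
       S b lo * Zs S N (Suc lo) (a # x) * Zw S N lo y +
       Zs S N (Suc lo) (a # x) * Zw S N (Suc lo) (b # y)"
    by (simp add: algebra_simps)
  also have "\<dots> = S a lo * Zs S N (Suc lo) x * Zw S N lo (b # y) +
       S b lo * Zs S N (Suc lo) (a # x) * Zw S N lo y +
       ((\<Sum>\<nu>\<in>{Suc lo..N}. S a \<nu> * Zs S N (Suc \<nu>) x * Zw S N \<nu> (b # y)) +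
     (\<Sum>\<nu>\<in>{Suc lo..N}. S b \<nu> * Zs S N (Suc \<nu>) (a # x) * Zw S N \<nu> y))"
    by (simp only: IH)
  also have "\<dots> = (\<Sum>\<nu>\<in>{lo..N}. S a \<nu> * Zs S N (Suc \<nu>) x * Zw S N \<nu> (b # y)) +
     (\<Sum>\<nu>\<in>{lo..N}. S b \<nu> * Zs S N (Suc \<nu>) (a # x) * Zw S N \<nu> y)"
    using lo by (simp add: sum.atLeast_Suc_atMost)
  finally show ?case .
qed

lemma telescope_alt:
  fixes T G :: "nat \<Rightarrow> 'a::comm_ring_1"
  assumes "0 < r" "T 0 = G 0" "T r = G (r - 1)" "\<And>i. 0 < i \<Longrightarrow> i < r \<Longrightarrow> T i = G (i - 1) + G i"
  shows "(\<Sum>i=0..r. (-1) ^ i * T i) = 0"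
proof -
  have partial: "(\<Sum>i=0..j. (-1) ^ i * T i) = (-1) ^ j * G j" if "j < r" for j
    using that
  proof (induction j)
    case 0 then show ?case using assms(2) by simp
  next
    case (Suc j)
    then show ?case using assms(4)[of "Suc j"] by (simp add: algebra_simps)
  qed
  obtain r' where r: "r = Suc r'" using assms(1) by (cases r) auto
  show ?thesis using partial[of r'] assms(3) by (simp add: r algebra_simps)
qed

lemma antipode_identity:
  assumes "k \<noteq> []"
  shows "(\<Sum>i=0..length k. (-1) ^ i * (Zs S N lo (rev (take i k)) * Zw S N lo (drop i k))) = 0"
proof (rule telescope_alt[where G = "\<lambda>i. \<Sum>\<nu>\<in>{lo..N}. S (k!i) \<nu> * Zs S N (Suc \<nu>) (rev (take i k)) * Zw S N \<nu> (drop (Suc i) k)"])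
  show "0 < length k" using assms by simp
  show "Zs S N lo (rev (take 0 k)) * Zw S N lo (drop 0 k) =
    (\<Sum>\<nu>\<in>{lo..N}. S (k!0) \<nu> * Zs S N (Suc \<nu>) (rev (take 0 k)) * Zw S N \<nu> (drop (Suc 0) k))"
    using assms by (cases k) auto
  have r: "rev (take (length k) k) = k ! (length k - 1) # rev (take (length k - 1) k)"
    using assms by (metis Suc_pred' length_greater_0_conv lessI rev.simps(2) rev_rev_ident take_Suc_conv_app_nth take_all_iff order_refl)
  show "Zs S N lo (rev (take (length k) k)) * Zw S N lo (drop (length k) k) =
    (\<Sum>\<nu>\<in>{lo..N}. S (k!(length k - 1)) \<nu> * Zs S N (Suc \<nu>) (rev (take (length k - 1) k)) * Zw S N \<nu> (drop (Suc (length k - 1)) k))"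
    using assms by (simp only: r) simp
  fix i assume i: "0 < i" "i < length k"
  have r: "rev (take i k) = k ! (i - 1) # rev (take (i - 1) k)"
    using i by (metis Suc_pred' less_imp_diff_less rev.simps(2) rev_rev_ident take_Suc_conv_app_nth)
  have d: "drop i k = k ! i # drop (Suc i) k" using i by (simp add: Cons_nth_drop_Suc)
  have d': "drop (Suc (i - 1)) k = drop i k" using i by simp
  show "Zs S N lo (rev (take i k)) * Zw S N lo (drop i k) =
    (\<Sum>\<nu>\<in>{lo..N}. S (k!(i-1)) \<nu> * Zs S N (Suc \<nu>) (rev (take (i-1) k)) * Zw S N \<nu> (drop (Suc (i-1)) k)) +
    (\<Sum>\<nu>\<in>{lo..N}. S (k!i) \<nu> * Zs S N (Suc \<nu>) (rev (take i k)) * Zw S N \<nu> (drop (Suc i) k))"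
    unfolding d' by (simp only: r d split_prod_lemma)
qed

lemma triple_split:
  fixes A B :: "nat \<Rightarrow> 'a::comm_ring_1"
  shows "(\<Sum>\<nu>\<in>{lo..N}. A \<nu>) * (\<Sum>\<mu>\<in>{lo..N}. B \<mu>) =
    (\<Sum>\<nu>\<in>{lo..N}. A \<nu> * (\<Sum>\<mu>\<in>{Suc \<nu>..N}. B \<mu>)) +
    (\<Sum>\<mu>\<in>{lo..N}. B \<mu> * (\<Sum>\<nu>\<in>{Suc \<mu>..N}. A \<nu>)) +
    (\<Sum>\<nu>\<in>{lo..N}. A \<nu> * B \<nu>)"
proof (induction "Suc N - lo" arbitrary: lo)
  case 0 then show ?case by simp
next
  case (Suc d)
  then have lo: "lo \<le> N" and d: "d = Suc N - Suc lo" by auto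
  note IH = Suc(1)[OF d]
  show ?case using lo IH
    by (simp add: sum.atLeast_Suc_atMost algebra_simps)
qed

lemma stuffle_Zs:
  assumes mult: "\<And>a b \<nu>. S (a + b) \<nu> = S a \<nu> * S b \<nu>"
  shows "Zs S N lo k * Zs S N lo l = sum_list (map (Zs S N lo) (stuffle k l))"
proof (induction k l arbitrary: lo rule: stuffle.induct)
  case (1 l) then show ?case by simp
next
  case (2 v va) then show ?case by simp
next
  case (3 a k b l)
  define A where "A = (\<lambda>\<nu>. S a \<nu> * Zs S N (Suc \<nu>) k)"
  define B where "B = (\<lambda>\<nu>. S b \<nu> * Zs S N (Suc \<nu>) l)"
  have "Zs S N lo (a # k) * Zs S N lo (b # l) = (\<Sum>\<nu>\<in>{lo..N}. A \<nu>) * (\<Sum>\<mu>\<in>{lo..N}. B \<mu>)"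
    by (simp add: A_def B_def)
  also have "\<dots> = (\<Sum>\<nu>\<in>{lo..N}. A \<nu> * (\<Sum>\<mu>\<in>{Suc \<nu>..N}. B \<mu>)) +
    (\<Sum>\<mu>\<in>{lo..N}. B \<mu> * (\<Sum>\<nu>\<in>{Suc \<mu>..N}. A \<nu>)) +
    (\<Sum>\<nu>\<in>{lo..N}. A \<nu> * B \<nu>)" by (rule triple_split)
  also have "(\<Sum>\<nu>\<in>{lo..N}. A \<nu> * (\<Sum>\<mu>\<in>{Suc \<nu>..N}. B \<mu>)) =
      sum_list (map (Zs S N lo) (map ((#) a) (stuffle k (b # l))))"
  proof -
    have "(\<Sum>\<nu>\<in>{lo..N}. A \<nu> * (\<Sum>\<mu>\<in>{Suc \<nu>..N}. B \<mu>)) =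
       (\<Sum>\<nu>\<in>{lo..N}. S a \<nu> * sum_list (map (Zs S N (Suc \<nu>)) (stuffle k (b # l))))"
      by (intro sum.cong refl) (simp add: A_def B_def 3(1)[symmetric] mult.assoc)
    also have "\<dots> = sum_list (map (Zs S N lo) (map ((#) a) (stuffle k (b # l))))"
      by (simp add: o_def sum_list_map_sum_swap sum_list_const_mult)
    finally show ?thesis .
  qed
  also have "(\<Sum>\<mu>\<in>{lo..N}. B \<mu> * (\<Sum>\<nu>\<in>{Suc \<mu>..N}. A \<nu>)) =
      sum_list (map (Zs S N lo) (map ((#) b) (stuffle (a # k) l)))"
  proof -
    have "(\<Sum>\<mu>\<in>{lo..N}. B \<mu> * (\<Sum>\<nu>\<in>{Suc \<mu>..N}. A \<nu>)) =
       (\<Sum>\<nu>\<in>{lo..N}. S b \<nu> * sum_list (map (Zs S N (Suc \<nu>)) (stuffle (a # k) l)))"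
      by (intro sum.cong refl) (simp add: A_def B_def 3(2)[symmetric] algebra_simps)
    also have "\<dots> = sum_list (map (Zs S N lo) (map ((#) b) (stuffle (a # k) l)))"
      by (simp add: o_def sum_list_map_sum_swap sum_list_const_mult)
    finally show ?thesis .
  qed
  also have "(\<Sum>\<nu>\<in>{lo..N}. A \<nu> * B \<nu>) =
      sum_list (map (Zs S N lo) (map ((#) (a + b)) (stuffle k l)))"
  proof -
    have "(\<Sum>\<nu>\<in>{lo..N}. A \<nu> * B \<nu>) =
       (\<Sum>\<nu>\<in>{lo..N}. S (a + b) \<nu> * sum_list (map (Zs S N (Suc \<nu>)) (stuffle k l)))"
      by (intro sum.cong refl) (simp add: A_def B_def 3(3)[symmetric] mult algebra_simps)
    also have "\<dots> = sum_list (map (Zs S N lo) (map ((#) (a + b)) (stuffle k l)))"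
      by (simp add: o_def sum_list_map_sum_swap sum_list_const_mult)
    finally show ?thesis .
  qed
  finally show ?case by simp
qed



definition Eset :: "(nat \<Rightarrow> real) set" where
  "Eset = {e. \<forall>j. (\<lambda>N. e N * harm N ^ j) \<longlonglongrightarrow> 0}"

definition approx :: "real poly \<Rightarrow> (nat \<Rightarrow> real) \<Rightarrow> bool" where
  "approx p x \<longleftrightarrow> (\<lambda>N. poly p (harm N) - x N) \<in> Eset"

lemma E_zero: "(\<lambda>N. 0) \<in> Eset" by (simp add: Eset_def)

lemma E_tendsto: "e \<in> Eset \<Longrightarrow> e \<longlonglongrightarrow> 0"
  unfolding Eset_def by (auto dest: spec[of _ 0])

lemma E_add: "e \<in> Eset \<Longrightarrow> f \<in> Eset \<Longrightarrow> (\<lambda>N. e N + f N) \<in> Eset"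
  unfolding Eset_def by (auto simp: distrib_right intro!: tendsto_add_zero)

lemma E_cmult: "e \<in> Eset \<Longrightarrow> (\<lambda>N. c * e N) \<in> Eset"
  unfolding Eset_def using tendsto_mult_right_zero by (fastforce simp: mult.assoc)

lemma E_neg: "e \<in> Eset \<Longrightarrow> (\<lambda>N. - e N) \<in> Eset"
  using E_cmult[of e "-1"] by simp

lemma E_diff: "e \<in> Eset \<Longrightarrow> f \<in> Eset \<Longrightarrow> (\<lambda>N. e N - f N) \<in> Eset"
  using E_add[OF _ E_neg] by simp

lemma E_harm: "e \<in> Eset \<Longrightarrow> (\<lambda>N. e N * harm N) \<in> Eset"
  unfolding Eset_def
proof safe
  fix j assume "\<forall>j. (\<lambda>N. e N * harm N ^ j) \<longlonglongrightarrow> 0"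
  then have "(\<lambda>N. e N * harm N ^ Suc j) \<longlonglongrightarrow> 0" by blast
  then show "(\<lambda>N. e N * harm N * harm N ^ j) \<longlonglongrightarrow> 0" by (simp add: algebra_simps)
qed

lemma E_poly: "e \<in> Eset \<Longrightarrow> (\<lambda>N. e N * poly p (harm N)) \<in> Eset"
proof (induction p)
  case 0 then show ?case by (simp add: E_zero)
next
  case (pCons a p)
  have "(\<lambda>N. c * e N + (e N * poly p (harm N)) * harm N) \<in> Eset" for c
    using pCons by (intro E_add E_cmult E_harm) auto
  then show ?case by (simp add: algebra_simps)
qed

lemma E_mult: "e \<in> Eset \<Longrightarrow> f \<in> Eset \<Longrightarrow> (\<lambda>N. e N * f N) \<in> Eset"
  unfolding Eset_def
proof safe
  fix j assume e: "\<forall>j. (\<lambda>N. e N * harm N ^ j) \<longlonglongrightarrow> 0" and f: "\<forall>j. (\<lambda>N. f N * harm N ^ j) \<longlonglongrightarrow> 0"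
  have "(\<lambda>N. (e N * harm N ^ j) * f N) \<longlonglongrightarrow> 0 * 0"
    using e f by (intro tendsto_mult) (auto dest: spec[of _ 0])
  then show "(\<lambda>N. e N * f N * harm N ^ j) \<longlonglongrightarrow> 0" by (simp add: algebra_simps)
qed

lemma poly_harm_zero:
  assumes "(\<lambda>N. poly p (harm N :: real)) \<longlonglongrightarrow> 0"
  shows "p = 0"
proof (rule ccontr)
  assume p: "p \<noteq> 0"
  show False
  proof (cases "degree p = 0")
    case True
    then obtain c where c: "p = [:c:]" by (meson degree_eq_zeroE)
    with p have "c \<noteq> 0" by auto
    moreover from assms c have "(\<lambda>N. c) \<longlonglongrightarrow> 0" by simp
    ultimately show False using LIMSEQ_const_iff by blast
  next
    case False
    have "filterlim (poly p) at_infinity at_infinity"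
      using False by (intro filterlim_poly_at_infinity) auto
    moreover have "filterlim (harm :: nat \<Rightarrow> real) at_infinity sequentially"
      using harm_at_top filterlim_at_top_imp_at_infinity by blast
    ultimately have "filterlim (\<lambda>N. poly p (harm N :: real)) at_infinity sequentially"
      by (rule filterlim_compose)
    with assms show False
      using not_tendsto_and_filterlim_at_infinity[of sequentially] by auto
  qed
qed

lemma approx_unique: "approx p x \<Longrightarrow> approx q x \<Longrightarrow> p = q"
proof -
  assume "approx p x" "approx q x"
  then have "(\<lambda>N. (poly p (harm N) - x N) - (poly q (harm N) - x N)) \<in> Eset"
    unfolding approx_def by (rule E_diff)
  then have "(\<lambda>N. poly (p - q) (harm N)) \<longlonglongrightarrow> 0"
    by (auto dest!: E_tendsto simp: algebra_simps)
  then show "p = q" using poly_harm_zero by fastforce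
qed

lemma approx_const: "approx [:c:] (\<lambda>N. c)"
  by (simp add: approx_def E_zero)

lemma approx_X: "approx [:0, 1:] harm"
  by (simp add: approx_def E_zero)

lemma approx_cong: "approx p x \<Longrightarrow> (\<And>N. x N = y N) \<Longrightarrow> approx p y"
  by (simp add: approx_def)

lemma approx_add: "approx p x \<Longrightarrow> approx q y \<Longrightarrow> approx (p + q) (\<lambda>N. x N + y N)"
  unfolding approx_def by (drule (1) E_add) (simp add: algebra_simps)

lemma approx_neg: "approx p x \<Longrightarrow> approx (- p) (\<lambda>N. - x N)"
  unfolding approx_def by (drule E_neg) (simp add: algebra_simps)

lemma approx_diff: "approx p x \<Longrightarrow> approx q y \<Longrightarrow> approx (p - q) (\<lambda>N. x N - y N)"
  using approx_add[OF _ approx_neg] by (simp add: algebra_simps)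

lemma approx_smult: "approx p x \<Longrightarrow> approx (smult c p) (\<lambda>N. c * x N)"
  unfolding approx_def by (drule E_cmult[where c = c]) (simp add: algebra_simps)

lemma approx_mult: "approx p x \<Longrightarrow> approx q y \<Longrightarrow> approx (p * q) (\<lambda>N. x N * y N)"
proof -
  assume ap: "approx p x" and aq: "approx q y"
  define e where "e = (\<lambda>N. poly p (harm N) - x N)"
  define f where "f = (\<lambda>N. poly q (harm N) - y N)"
  have e: "e \<in> Eset" and f: "f \<in> Eset" using ap aq by (simp_all add: approx_def e_def f_def)
  have "(\<lambda>N. e N * poly q (harm N) + f N * poly p (harm N) - e N * f N) \<in> Eset"
    by (intro E_diff E_add E_poly E_mult e f)
  moreover have "poly (p * q) (harm N) - x N * y N = e N * poly q (harm N) + f N * poly p (harm N) - e N * f N" for N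
    by (simp add: e_def f_def algebra_simps)
  ultimately show ?thesis unfolding approx_def by simp
qed

lemma approx_sum: "finite A \<Longrightarrow> (\<And>a. a \<in> A \<Longrightarrow> approx (p a) (x a)) \<Longrightarrow> approx (\<Sum>a\<in>A. p a) (\<lambda>N. \<Sum>a\<in>A. x a N)"
proof (induction A rule: finite_induct)
  case empty then show ?case using approx_const[of 0] by simp
next
  case (insert a A)
  then show ?case by (simp add: approx_add)
qed

lemma approx_sum_list: "(\<And>a. a \<in> set xs \<Longrightarrow> approx (p a) (x a)) \<Longrightarrow> approx (sum_list (map p xs)) (\<lambda>N. sum_list (map (\<lambda>a. x a N) xs))"
proof (induction xs)
  case Nil then show ?case using approx_const[of 0] by simp
next
  case (Cons a xs)
  then show ?case by (simp add: approx_add)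
qed



lemma Zs_big_ne: "N < lo \<Longrightarrow> xs \<noteq> [] \<Longrightarrow> Zs S N lo xs = 0"
  by (cases xs) auto

lemma Zs_snoc:
  "lo \<le> Suc M \<Longrightarrow> Zs S (Suc M) lo (k @ [a]) = Zs S M lo (k @ [a]) + S a (Suc M) * Zs S M lo k"
proof (induction k arbitrary: lo)
  case Nil then show ?case by simp
next
  case (Cons c k)
  have "Zs S (Suc M) lo ((c # k) @ [a]) = (\<Sum>\<nu>\<in>{lo..M}. S c \<nu> * Zs S (Suc M) (Suc \<nu>) (k @ [a]))"
    using Cons.prems by (simp add: sum.atLeast_Suc_atMost_Suc_shift del: sum.cl_ivl_Suc) (simp add: sum.cl_ivl_Suc Zs_big_ne)
  also have "\<dots> = (\<Sum>\<nu>\<in>{lo..M}. S c \<nu> * (Zs S M (Suc \<nu>) (k @ [a]) + S a (Suc M) * Zs S M (Suc \<nu>) k))"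
    by (intro sum.cong refl) (simp add: Cons.IH)
  also have "\<dots> = Zs S M lo ((c # k) @ [a]) + S a (Suc M) * Zs S M lo (c # k)"
    by (simp add: sum.distrib sum_distrib_left algebra_simps)
  finally show ?case .
qed

definition Bset :: "nat \<Rightarrow> nat \<Rightarrow> nat \<Rightarrow> nat list set" where
  "Bset lo N r = {n. length n = r \<and> sorted_wrt (<) n \<and> (\<forall>x\<in>set n. lo \<le> x \<and> x \<le> N)}"

lemma finite_Bset: "finite (Bset lo N r)"
proof -
  have "Bset lo N r \<subseteq> {n. set n \<subseteq> {lo..N} \<and> length n = r}"
    by (auto simp: Bset_def)
  then show ?thesis using finite_lists_length_eq[of "{lo..N}" r] finite_subset by blast
qed

lemma Bset_Suc: "Bset lo N (Suc r) = (\<Union>\<nu>\<in>{lo..N}. (#) \<nu> ` Bset (Suc \<nu>) N r)"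
  unfolding Bset_def by (auto simp: length_Suc_conv Suc_le_eq) (meson le_less_trans less_imp_le)

lemma Bset_0: "Bset lo N 0 = {[]}" by (auto simp: Bset_def)

definition gterm :: "(nat \<Rightarrow> nat \<Rightarrow> 'a::comm_ring_1) \<Rightarrow> nat list \<Rightarrow> nat list \<Rightarrow> 'a" where
  "gterm S k n = (\<Prod>i<length k. S (k ! i) (n ! i))"

lemma Zs_eq_sum: "Zs S N lo k = (\<Sum>n\<in>Bset lo N (length k). gterm S k n)"
proof (induction k arbitrary: lo)
  case Nil then show ?case by (simp add: Bset_0 gterm_def)
next
  case (Cons a k)
  have "(\<Sum>n\<in>Bset lo N (length (a # k)). gterm S (a # k) n) =
        (\<Sum>\<nu>\<in>{lo..N}. \<Sum>n\<in>(#) \<nu> ` Bset (Suc \<nu>) N (length k). gterm S (a # k) n)"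
    unfolding length_Cons Bset_Suc
    by (rule sum.UNION_disjoint) (auto simp: finite_Bset)
  also have "\<dots> = (\<Sum>\<nu>\<in>{lo..N}. \<Sum>n\<in>Bset (Suc \<nu>) N (length k). gterm S (a # k) (\<nu> # n))"
    by (rule sum.cong[OF refl]) (simp add: sum.reindex)
  also have "\<dots> = (\<Sum>\<nu>\<in>{lo..N}. S a \<nu> * (\<Sum>n\<in>Bset (Suc \<nu>) N (length k). gterm S k n))"
    by (intro sum.cong refl) (simp add: gterm_def prod.lessThan_Suc_shift sum_distrib_left del: prod.lessThan_Suc)
  also have "\<dots> = Zs S N lo (a # k)" by (simp add: Cons.IH)
  finally show ?case ..
qed

definition Sr :: "nat \<Rightarrow> nat \<Rightarrow> real" where "Sr a \<nu> = 1 / real \<nu> ^ a"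

lemma Sr_mult: "Sr (a + b) \<nu> = Sr a \<nu> * Sr b \<nu>"
  by (simp add: Sr_def power_add)

lemma Sr_nonneg: "0 \<le> Sr a \<nu>" by (simp add: Sr_def)

lemma Zs_nonneg: "0 \<le> Zs Sr N lo k"
  by (induction k arbitrary: lo) (auto intro!: sum_nonneg mult_nonneg_nonneg Sr_nonneg)

lemma sum_inv_le_harm: "1 \<le> lo \<Longrightarrow> (\<Sum>\<nu>\<in>{lo..N}. 1 / real \<nu>) \<le> harm N"
  unfolding harm_def inverse_eq_divide by (rule sum_mono2) auto

lemma Zs_bound: "is_index k \<Longrightarrow> 1 \<le> lo \<Longrightarrow> Zs Sr N lo k \<le> harm N ^ length k"
proof (induction k arbitrary: lo)
  case Nil then show ?case by simp
next
  case (Cons a k)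
  have a: "1 \<le> a" and k: "is_index k" using Cons.prems by (auto simp: is_index_def)
  have "Zs Sr N lo (a # k) \<le> (\<Sum>\<nu>\<in>{lo..N}. 1 / real \<nu> * harm N ^ length k)"
    unfolding Zs.simps
  proof (rule sum_mono)
    fix \<nu> assume "\<nu> \<in> {lo..N}"
    then have \<nu>: "1 \<le> \<nu>" using Cons.prems by auto
    have "Sr a \<nu> \<le> 1 / real \<nu>"
    proof -
      have "real \<nu> ^ 1 \<le> real \<nu> ^ a" using \<nu> a by (intro power_increasing) auto
      then show ?thesis using \<nu> by (simp add: Sr_def divide_simps)
    qed
    moreover have "Zs Sr N (Suc \<nu>) k \<le> harm N ^ length k" using Cons.IH[OF k] by simp
    ultimately show "Sr a \<nu> * Zs Sr N (Suc \<nu>) k \<le> 1 / real \<nu> * harm N ^ length k"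
      by (intro mult_mono) (auto simp: Zs_nonneg)
  qed
  also have "\<dots> = (\<Sum>\<nu>\<in>{lo..N}. 1 / real \<nu>) * harm N ^ length k" by (simp add: sum_distrib_right)
  also have "\<dots> \<le> harm N * harm N ^ length k"
    using sum_inv_le_harm[of lo N] Cons.prems by (intro mult_right_mono) (auto simp: harm_nonneg)
  finally show ?case by simp
qed

lemma harm_le_ln: "1 \<le> n \<Longrightarrow> harm n \<le> 1 + ln (real n)"
  using euler_mascheroni_sequence_decreasing[of 1 n] by (simp add: harm_def)



definition bseq :: "nat \<Rightarrow> nat \<Rightarrow> real" where
  "bseq j \<nu> = harm \<nu> ^ j / real \<nu> ^ 2"

lemma bseq_nonneg: "0 \<le> bseq j \<nu>"
  by (simp add: bseq_def harm_nonneg)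

lemma summable_bseq: "summable (bseq j)"
proof -
  define a :: real where "a = 1 / (2 * (real j + 1))"
  have a: "0 < a" by (simp add: a_def)
  have aj: "a * real j \<le> 1 / 2" by (simp add: a_def field_simps)
  define C where "C = (1 + 1 / a) ^ j"
  have bound: "norm (bseq j \<nu>) \<le> C * real \<nu> powr (- 3 / 2)" if \<nu>: "1 \<le> \<nu>" for \<nu>
  proof -
    have x: "1 \<le> real \<nu>" using \<nu> by simp
    have p1: "1 \<le> real \<nu> powr a" using x a by (intro ge_one_powr_ge_zero) auto
    have "harm \<nu> \<le> 1 + ln (real \<nu>)" using harm_le_ln \<nu> by blast
    also have "\<dots> \<le> real \<nu> powr a + real \<nu> powr a / a"
      using ln_powr_bound[OF x a] p1 by linarith
    also have "\<dots> = (1 + 1 / a) * real \<nu> powr a" by (simp add: field_simps)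
    finally have h: "harm \<nu> \<le> (1 + 1 / a) * real \<nu> powr a" .
    have "harm \<nu> ^ j \<le> ((1 + 1 / a) * real \<nu> powr a) ^ j"
      using h by (intro power_mono) (auto simp: harm_nonneg)
    also have "\<dots> = C * real \<nu> powr (real j * a)"
      using \<nu> by (simp add: C_def power_mult_distrib powr_power)
    also have "\<dots> \<le> C * real \<nu> powr (1 / 2)"
      using aj x a by (intro mult_left_mono powr_mono) (auto simp: C_def mult.commute)
    finally have hj: "harm \<nu> ^ j \<le> C * real \<nu> powr (1 / 2)" .
    have "norm (bseq j \<nu>) = harm \<nu> ^ j / real \<nu> ^ 2" by (simp add: bseq_def harm_nonneg)
    also have "\<dots> \<le> C * real \<nu> powr (1 / 2) / real \<nu> ^ 2"
      using hj \<nu> by (intro divide_right_mono) auto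
    also have "\<dots> = C * real \<nu> powr (- 3 / 2)"
    proof -
      have "real \<nu> ^ 2 = real \<nu> powr 2" using \<nu> by (simp add: powr_realpow)
      moreover have "real \<nu> powr (-3/2) = real \<nu> powr (1/2) / real \<nu> powr 2"
        using powr_diff[of "real \<nu>" "1/2" 2] by simp
      ultimately show ?thesis by simp
    qed
    finally show ?thesis .
  qed
  have "summable (\<lambda>\<nu>. C * real \<nu> powr (- 3 / 2))"
    by (intro summable_mult) (simp add: summable_real_powr_iff)
  then show ?thesis using bound by (rule summable_comparison_test'[where N = 1])
qed

definition tl_sum :: "nat \<Rightarrow> nat \<Rightarrow> real" where
  "tl_sum j N = (\<Sum>i. bseq j (i + Suc N))"

lemma tl_sum_tendsto: "tl_sum j \<longlonglongrightarrow> 0"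
proof -
  have s: "summable (bseq j)" by (rule summable_bseq)
  have eq: "tl_sum j N = suminf (bseq j) - (\<Sum>i<Suc N. bseq j i)" for N
    unfolding tl_sum_def using suminf_split_initial_segment[OF s, of "Suc N"] by simp
  have "(\<lambda>N. \<Sum>i<Suc N. bseq j i) \<longlonglongrightarrow> suminf (bseq j)"
    using summable_LIMSEQ[OF s] by (rule LIMSEQ_Suc)
  then have "(\<lambda>N. suminf (bseq j) - (\<Sum>i<Suc N. bseq j i)) \<longlonglongrightarrow> suminf (bseq j) - suminf (bseq j)"
    by (intro tendsto_diff tendsto_const)
  then show ?thesis by (simp add: eq[abs_def])
qed

lemma tl_sum_nonneg: "0 \<le> tl_sum j N"
  unfolding tl_sum_def
  by (intro suminf_nonneg summable_ignore_initial_segment summable_bseq bseq_nonneg)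

lemma tl_sum_mult_harm: "tl_sum d N * harm N ^ j \<le> tl_sum (d + j) N"
proof -
  have s: "summable (\<lambda>i. bseq d (i + Suc N))" "summable (\<lambda>i. bseq (d+j) (i + Suc N))"
    by (intro summable_ignore_initial_segment summable_bseq)+
  have "tl_sum d N * harm N ^ j = (\<Sum>i. bseq d (i + Suc N) * harm N ^ j)"
    unfolding tl_sum_def by (rule suminf_mult2[OF s(1)])
  also have "\<dots> \<le> (\<Sum>i. bseq (d + j) (i + Suc N))"
  proof (rule suminf_le)
    fix i
    have "harm N ^ j \<le> (harm (i + Suc N) :: real) ^ j"
    proof (rule power_mono)
      show "(harm N :: real) \<le> harm (i + Suc N)" by (rule harm_mono) simp
    qed (rule harm_nonneg)
    then show "bseq d (i + Suc N) * harm N ^ j \<le> bseq (d + j) (i + Suc N)"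
      unfolding bseq_def power_add
      by (auto simp: divide_simps harm_nonneg intro!: mult_left_mono)
  next
    show "summable (\<lambda>i. bseq d (i + Suc N) * harm N ^ j)" by (rule summable_mult2[OF s(1)])
  next
    show "summable (\<lambda>i. bseq (d + j) (i + Suc N))" by (rule s(2))
  qed
  finally show ?thesis unfolding tl_sum_def .
qed

lemma sum_le_tl_sum: "(\<Sum>\<nu>\<in>{Suc N..M}. bseq j \<nu>) \<le> tl_sum j N"
proof -
  have "(\<Sum>\<nu>\<in>{Suc N..M}. bseq j \<nu>) = (\<Sum>i\<in>{..<Suc M - Suc N}. bseq j (i + Suc N))"
  proof (cases "Suc N \<le> M")
    case True
    then show ?thesis
      by (intro sum.reindex_bij_witness[where j = "\<lambda>\<nu>. \<nu> - Suc N" and i = "\<lambda>i. i + Suc N"]) auto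
  next
    case False then show ?thesis by simp
  qed
  also have "\<dots> \<le> tl_sum j N" unfolding tl_sum_def
    by (intro sum_le_suminf summable_ignore_initial_segment summable_bseq bseq_nonneg) auto
  finally show ?thesis .
qed



definition Mset :: "nat list \<Rightarrow> nat list set" where
  "Mset k = {n :: nat list. length n = length k \<and> sorted_wrt (<) n \<and> (\<forall>x\<in>set n. 0 < x)}"

lemma mzv_altdef: "mzv k = infsum (gterm Sr k) (Mset k)"
  unfolding mzv_def Mset_def gterm_def Sr_def by simp

lemma gterm_Sr_nonneg: "0 \<le> gterm Sr k n"
  by (simp add: gterm_def Sr_nonneg prod_nonneg)

lemma Bset_sub_Mset: "Bset 1 N (length k) \<subseteq> Mset k"
  by (auto simp: Bset_def Mset_def)

lemma finite_sub_Bset: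
  assumes "finite F" "F \<subseteq> Mset k"
  shows "\<exists>M\<ge>N. F \<subseteq> Bset 1 M (length k)"
proof -
  define M where "M = N + (\<Sum>n\<in>F. sum_list n)"
  have "F \<subseteq> Bset 1 M (length k)"
  proof
    fix n assume n: "n \<in> F"
    have "x \<le> M" if "x \<in> set n" for x
    proof -
      have "x \<le> sum_list n" using that by (simp add: member_le_sum_list)
      also have "\<dots> \<le> (\<Sum>n\<in>F. sum_list n)" using n assms(1) by (intro member_le_sum) auto
      finally show ?thesis by (simp add: M_def)
    qed
    then show "n \<in> Bset 1 M (length k)" using n assms(2) by (auto simp: Bset_def Mset_def Suc_le_eq)
  qed
  then show ?thesis by (auto simp: M_def intro!: exI[of _ M])
qed

lemma mzv_Nil: "mzv [] = 1"
proof -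
  have "Mset [] = {[]}" by (auto simp: Mset_def)
  then show ?thesis by (simp add: mzv_altdef gterm_def)
qed

lemma approx_mzv:
  assumes "admissible k"
  shows "approx [:mzv k:] (\<lambda>N. Zs Sr N 1 k)"
proof (cases "k = []")
  case True then show ?thesis using approx_const[of 1] by (simp add: mzv_Nil)
next
  case False
  define k' a where "k' = butlast k" and "a = last k"
  have k: "k = k' @ [a]" using False by (simp add: k'_def a_def)
  have a: "2 \<le> a" and idx: "is_index k" using assms False by (auto simp: admissible_def a_def)
  have idx': "is_index k'" using idx by (auto simp: is_index_def k)
  define d where "d = length k'"
  define Z where "Z = (\<lambda>N. Zs Sr N 1 k)"
  have incr: "Z (Suc M) = Z M + Sr a (Suc M) * Zs Sr M 1 k'" for M
    unfolding Z_def k by (rule Zs_snoc) simp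
  have incr_nonneg: "0 \<le> Sr a (Suc M) * Zs Sr M 1 k'" for M
    by (intro mult_nonneg_nonneg Sr_nonneg Zs_nonneg)
  have incr_le: "Sr a (Suc M) * Zs Sr M 1 k' \<le> bseq d (Suc M)" for M
  proof -
    have "Sr a (Suc M) \<le> 1 / real (Suc M) ^ 2"
    proof -
      have "real (Suc M) ^ 2 \<le> real (Suc M) ^ a" using a by (intro power_increasing) auto
      then show ?thesis by (simp add: Sr_def divide_simps del: of_nat_Suc)
    qed
    moreover have "Zs Sr M 1 k' \<le> harm (Suc M) ^ d"
    proof -
      have "Zs Sr M 1 k' \<le> harm M ^ d" using Zs_bound[OF idx', of 1 M] by (simp add: d_def)
      also have "\<dots> \<le> harm (Suc M) ^ d"
      proof (rule power_mono)
        show "(harm M :: real) \<le> harm (Suc M)" by (rule harm_mono) simp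
      qed (rule harm_nonneg)
      finally show ?thesis .
    qed
    ultimately have "Sr a (Suc M) * Zs Sr M 1 k' \<le> 1 / real (Suc M) ^ 2 * harm (Suc M) ^ d"
      by (intro mult_mono) (auto simp: Zs_nonneg)
    then show ?thesis by (simp add: bseq_def)
  qed
  have mono_bound: "Z N \<le> Z M \<and> Z M \<le> Z N + (\<Sum>\<nu>\<in>{Suc N..M}. bseq d \<nu>)" if "N \<le> M" for N M
    using that
  proof (induction M rule: dec_induct)
    case base then show ?case by simp
  next
    case (step M)
    have "Z (Suc M) \<le> Z N + (\<Sum>\<nu>\<in>{Suc N..M}. bseq d \<nu>) + bseq d (Suc M)"
      using step.IH incr[of M] incr_le[of M] by linarith
    also have "\<dots> = Z N + (\<Sum>\<nu>\<in>{Suc N..Suc M}. bseq d \<nu>)"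
      using step.hyps by (simp add: sum.cl_ivl_Suc)
    finally show ?case using step.IH incr[of M] incr_nonneg[of M] by linarith
  qed
  have Fbound: "sum (gterm Sr k) F \<le> Z N + tl_sum d N" if F: "finite F" "F \<subseteq> Mset k" for F N
  proof -
    obtain M where M: "M \<ge> N" "F \<subseteq> Bset 1 M (length k)" using finite_sub_Bset[OF F, of N] by blast
    have "sum (gterm Sr k) F \<le> sum (gterm Sr k) (Bset 1 M (length k))"
      using M by (intro sum_mono2 finite_Bset gterm_Sr_nonneg) auto
    also have "\<dots> = Z M" by (simp add: Z_def Zs_eq_sum)
    also have "\<dots> \<le> Z N + tl_sum d N" using mono_bound[OF M(1)] sum_le_tl_sum[of d N M] by linarith
    finally show ?thesis .
  qed
  have bdd: "bdd_above (sum (gterm Sr k) ` {F. finite F \<and> F \<subseteq> Mset k})"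
    using Fbound[where N = 0] by (auto intro!: bdd_aboveI[where M = "Z 0 + tl_sum d 0"])
  have summ: "gterm Sr k summable_on Mset k"
    using bdd by (intro nonneg_bdd_above_summable_on gterm_Sr_nonneg) (auto simp: conj_commute)
  have mzv_eq: "mzv k = (SUP F\<in>{F. finite F \<and> F \<subseteq> Mset k}. sum (gterm Sr k) F)"
    unfolding mzv_altdef by (rule infsum_nonneg_is_SUPREMUM_real[OF summ gterm_Sr_nonneg])
  have lower: "Z N \<le> mzv k" for N
  proof -
    have "Z N = sum (gterm Sr k) (Bset 1 N (length k))" by (simp add: Z_def Zs_eq_sum)
    also have "\<dots> \<le> mzv k" unfolding mzv_eq
      by (rule cSUP_upper[OF _ bdd]) (use Bset_sub_Mset[of N k] in \<open>auto simp: finite_Bset\<close>)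
    finally show ?thesis .
  qed
  have upper: "mzv k \<le> Z N + tl_sum d N" for N
    unfolding mzv_eq by (rule cSUP_least) (auto intro: Fbound)
  have "(\<lambda>N. mzv k - Z N) \<in> Eset"
    unfolding Eset_def
  proof (safe)
    fix j
    show "(\<lambda>N. (mzv k - Z N) * harm N ^ j) \<longlonglongrightarrow> 0"
    proof (rule tendsto_sandwich[OF _ _ tendsto_const tl_sum_tendsto[of "d + j"]])
      show "\<forall>\<^sub>F N in sequentially. 0 \<le> (mzv k - Z N) * harm N ^ j"
        using lower by (auto intro!: mult_nonneg_nonneg simp: harm_nonneg)
      show "\<forall>\<^sub>F N in sequentially. (mzv k - Z N) * harm N ^ j \<le> tl_sum (d + j) N"
      proof (intro always_eventually allI)
        fix N
        have "(mzv k - Z N) * harm N ^ j \<le> tl_sum d N * harm N ^ j"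
          using upper[of N] by (intro mult_right_mono) (auto simp: harm_nonneg)
        also have "\<dots> \<le> tl_sum (d + j) N" by (rule tl_sum_mult_harm)
        finally show "(mzv k - Z N) * harm N ^ j \<le> tl_sum (d + j) N" .
      qed
    qed
  qed
  then show ?thesis by (simp add: approx_def Z_def)
qed



lemma is_index_Cons: "is_index (a # k) \<longleftrightarrow> 0 < a \<and> is_index k"
  by (simp add: is_index_def)

lemma stuffle_index:
  "is_index k \<Longrightarrow> is_index l \<Longrightarrow> w \<in> set (stuffle k l) \<Longrightarrow> is_index w"
proof (induction k l arbitrary: w rule: stuffle.induct)
  case (1 l) then show ?case by simp
next
  case (2 v va) then show ?case by simp
next
  case (3 a k b l)
  have h: "0 < a" "is_index k" "0 < b" "is_index l"
    using "3.prems"(1,2) by (simp_all add: is_index_Cons)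
  from "3.prems"(3) have "w \<in> (#) a ` set (stuffle k (b # l)) \<or> w \<in> (#) b ` set (stuffle (a # k) l) \<or>
      w \<in> (#) (a + b) ` set (stuffle k l)"
    by (simp only: stuffle.simps set_append set_map Un_iff)
  then show ?case
  proof (elim disjE imageE)
    fix x assume "x \<in> set (stuffle k (b # l))" "w = a # x"
    then show ?thesis using "3.IH"(1)[of x] h "3.prems"(2) by (simp add: is_index_Cons)
  next
    fix x assume "x \<in> set (stuffle (a # k) l)" "w = b # x"
    then show ?thesis using "3.IH"(2)[of x] h "3.prems"(1) by (simp add: is_index_Cons)
  next
    fix x assume "x \<in> set (stuffle k l)" "w = (a + b) # x"
    then show ?thesis using "3.IH"(3)[of x] h by (simp add: is_index_Cons)
  qed
qed

definition trail :: "nat list \<Rightarrow> nat" where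
  "trail w = length (takeWhile (\<lambda>x. x = 1) (rev w))"

lemma trail_Cons: "trail (a # w) = (if \<forall>x\<in>set w. x = 1 then (if a = 1 then Suc (length w) else length w) else trail w)"
  by (auto simp: trail_def takeWhile_append)

lemma trail_Nil [simp]: "trail [] = 0" by (simp add: trail_def)

lemma trail_snoc1 [simp]: "trail (w @ [1]) = Suc (trail w)"
  by (simp add: trail_def)

lemma trail_snoc1' [simp]: "trail (w @ [Suc 0]) = Suc (trail w)"
  by (simp add: trail_def)

lemma stuffle_Nil2 [simp]: "stuffle k [] = [k]"
  by (cases k) auto

lemma trail_le_length: "trail w \<le> length w"
  unfolding trail_def by (metis length_rev length_takeWhile_le)

lemma trail_all_ones: "(\<forall>x\<in>set w. x = 1) \<Longrightarrow> trail w = length w"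
  unfolding trail_def by (subst takeWhile_eq_all_conv[THEN iffD2]) auto

lemma trail_eq_length: "trail w = length w \<Longrightarrow> \<forall>x\<in>set w. x = 1"
proof -
  assume t: "trail w = length w"
  let ?P = "\<lambda>x::nat. x = 1"
  have "length (takeWhile ?P (rev w)) + length (dropWhile ?P (rev w)) = length (rev w)"
    by (metis length_append takeWhile_dropWhile_id)
  with t have "dropWhile ?P (rev w) = []" by (simp add: trail_def)
  then have "takeWhile ?P (rev w) = rev w" by (metis append_Nil2 takeWhile_dropWhile_id)
  then have "\<forall>x\<in>set (rev w). ?P x" by (simp only: takeWhile_eq_all_conv)
  then show ?thesis by simp
qed

lemma trail_mono_Cons: "trail w \<le> trail (a # w)"
  using trail_le_length[of w] by (auto simp: trail_Cons)

lemma stuffle_one_length: "w \<in> set (stuffle k [b]) \<Longrightarrow> length w = length k \<or> length w = Suc (length k)"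
proof (induction k arbitrary: w)
  case Nil then show ?case by simp
next
  case (Cons a k)
  then show ?case by (auto dest!: Cons.IH)
qed

lemma stuffle_one_mem: "k @ [b] \<in> set (stuffle k [b])"
  by (induction k) auto

lemma all_ones_snoc: "\<forall>x\<in>set k. x = 1 \<Longrightarrow> 1 # k = k @ [1]"
  by (induction k) auto

lemma stuffle_one_trail:
  "is_index k \<Longrightarrow> w \<in> set (stuffle k [1]) \<Longrightarrow> w \<noteq> k @ [1] \<Longrightarrow> trail w \<le> trail k"
proof (induction k arbitrary: w)
  case Nil then show ?case by simp
next
  case (Cons a k)
  have a: "1 \<le> a" and ik: "is_index k" using Cons.prems(1) by (auto simp: is_index_def)
  from Cons.prems(2) consider (A) w' where "w = a # w'" "w' \<in> set (stuffle k [1])"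
    | (B) "w = 1 # a # k" | (C) "w = (a + 1) # k"
    by (cases k) auto
  then show ?case
  proof cases
    case A
    with Cons.prems(3) have ne: "w' \<noteq> k @ [1]" by auto
    have IH: "trail w' \<le> trail k" using Cons.IH[OF ik A(2) ne] .
    show ?thesis
    proof (cases "\<forall>x\<in>set w'. x = 1")
      case True
      then have tw: "trail w' = length w'" by (rule trail_all_ones)
      have "length w' = length k \<or> length w' = Suc (length k)" by (rule stuffle_one_length[OF A(2)])
      with IH tw trail_le_length[of k] have lk: "length w' = length k" "trail k = length k" by auto
      then have "\<forall>x\<in>set k. x = 1" by (intro trail_eq_length)
      then show ?thesis using A True lk by (auto simp: trail_Cons)
    next
      case False
      then show ?thesis using A IH trail_mono_Cons[of k a] by (auto simp: trail_Cons)
    qed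
  next
    case B
    have "\<not> (\<forall>x\<in>set (a # k). x = 1)"
      using B Cons.prems(3) all_ones_snoc[of "a # k"] by auto
    then show ?thesis using B by (simp add: trail_Cons)
  next
    case C
    show ?thesis
      using C a trail_le_length[of k] trail_mono_Cons[of k a] by (auto simp: trail_Cons)
  qed
qed

lemma sum_list_count_split:
  "sum_list (map f xs) = of_nat (count_list xs x) * f x + sum_list (map f (filter (\<lambda>y. y \<noteq> x) xs))"
  by (induction xs) (auto simp: algebra_simps)

lemma count_list_pos: "x \<in> set xs \<Longrightarrow> 0 < count_list xs x"
  by (induction xs) auto

lemma trail_Suc_decomp:
  assumes "trail k = Suc m"
  shows "\<exists>k0. k = k0 @ [1] \<and> trail k0 = m"
proof -
  have "k \<noteq> []" using assms by auto
  then obtain k0 b where k: "k = k0 @ [b]" by (metis rev_exhaust)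
  with assms have "b = 1" by (auto simp: trail_def split: if_splits)
  with k assms show ?thesis by auto
qed

lemma trail0_admissible: "is_index k \<Longrightarrow> trail k = 0 \<Longrightarrow> admissible k"
proof -
  assume i: "is_index k" and t: "trail k = 0"
  show "admissible k"
  proof (cases "k = []")
    case True then show ?thesis using i by (simp add: admissible_def)
  next
    case False
    then obtain k0 b where k: "k = k0 @ [b]" by (metis rev_exhaust)
    with t have "b \<noteq> 1" by (auto simp: trail_def)
    moreover have "0 < b" using i k by (auto simp: is_index_def)
    ultimately show ?thesis using i k by (auto simp: admissible_def)
  qed
qed



definition Zr :: "nat list \<Rightarrow> nat \<Rightarrow> real" where "Zr k N = Zs Sr N 1 k"

lemma Zr_hom: "Zr k N * Zr l N = sum_list (map (\<lambda>w. Zr w N) (stuffle k l))"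
  unfolding Zr_def using stuffle_Zs[of Sr N 1 k l] Sr_mult by (simp add: o_def)

lemma Zr_one: "Zr [1] N = harm N"
  by (simp add: Zr_def Sr_def harm_def inverse_eq_divide)

lemma relation_one:
  "Zr k0 N * harm N = of_nat (count_list (stuffle k0 [1]) (k0 @ [1])) * Zr (k0 @ [1]) N +
     sum_list (map (\<lambda>w. Zr w N) (filter (\<lambda>y. y \<noteq> k0 @ [1]) (stuffle k0 [1])))"
  using Zr_hom[of k0 N "[1]"] sum_list_count_split[of "\<lambda>w. Zr w N" "stuffle k0 [1]" "k0 @ [1]"]
    Zr_one[of N] by simp

lemma approx_exists: "is_index k \<Longrightarrow> \<exists>p. approx p (Zr k)"
proof -
  have "\<forall>k. is_index k \<longrightarrow> trail k \<le> m \<longrightarrow> (\<exists>p. approx p (Zr k))" for m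
  proof (induction m)
    case 0
    show ?case
    proof (intro allI impI)
      fix k assume "is_index k" "trail k \<le> 0"
      then have "admissible k" using trail0_admissible by simp
      then show "\<exists>p. approx p (Zr k)" using approx_mzv[of k] by (auto simp: Zr_def[abs_def])
    qed
  next
    case (Suc m)
    show ?case
    proof (intro allI impI)
      fix k assume ik: "is_index k" and tk: "trail k \<le> Suc m"
      show "\<exists>p. approx p (Zr k)"
      proof (cases "trail k \<le> m")
        case True then show ?thesis using Suc.IH ik by blast
      next
        case False
        then have "trail k = Suc m" using tk by simp
        then obtain k0 where k: "k = k0 @ [1]" and t0: "trail k0 = m" using trail_Suc_decomp by blast
        have ik0: "is_index k0" using ik k by (simp add: is_index_def)
        obtain p0 where p0: "approx p0 (Zr k0)" using Suc.IH ik0 t0 by blast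
        define R where "R = filter (\<lambda>y. y \<noteq> k0 @ [1]) (stuffle k0 [1])"
        have "\<forall>w\<in>set R. \<exists>p. approx p (Zr w)"
        proof
          fix w assume w: "w \<in> set R"
          then have "w \<in> set (stuffle k0 [1])" "w \<noteq> k0 @ [1]" by (auto simp: R_def)
          moreover have "is_index [1::nat]" by (simp add: is_index_def)
          ultimately have "is_index w" "trail w \<le> m"
            using stuffle_index[OF ik0] stuffle_one_trail[OF ik0] t0 by auto
          then show "\<exists>p. approx p (Zr w)" using Suc.IH by blast
        qed
        then obtain P where P: "\<And>w. w \<in> set R \<Longrightarrow> approx (P w) (Zr w)" by metis
        define c where "c = count_list (stuffle k0 [1]) (k0 @ [1])"
        have c: "0 < c" unfolding c_def by (intro count_list_pos stuffle_one_mem)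
        have rel: "Zr k N = (1 / real c) * (Zr k0 N * harm N - sum_list (map (\<lambda>w. Zr w N) R))" for N
          using relation_one[of k0 N] c by (simp add: k R_def c_def field_simps)
        have "approx (smult (1 / real c) (p0 * [:0, 1:] - sum_list (map P R)))
           (\<lambda>N. (1 / real c) * (Zr k0 N * harm N - sum_list (map (\<lambda>w. Zr w N) R)))"
          by (intro approx_smult approx_diff approx_mult p0 approx_X approx_sum_list P)
        from approx_cong[OF this, of "Zr k"] show ?thesis using rel by auto
      qed
    qed
  qed
  then show "is_index k \<Longrightarrow> \<exists>p. approx p (Zr k)" by blast
qed

definition fz :: "nat list \<Rightarrow> real poly" where
  "fz k = (if is_index k then (THE p. approx p (Zr k)) else 0)"

lemma fz_approx: "is_index k \<Longrightarrow> approx (fz k) (Zr k)"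
proof -
  assume ik: "is_index k"
  then have "\<exists>!p. approx p (Zr k)" using approx_exists approx_unique by blast
  then have "approx (THE p. approx p (Zr k)) (Zr k)" by (rule theI')
  then show ?thesis using ik by (simp add: fz_def)
qed

lemma fz_eq: "is_index k \<Longrightarrow> approx p (Zr k) \<Longrightarrow> fz k = p"
  using fz_approx approx_unique by blast

definition spec :: "(nat list \<Rightarrow> real poly) \<Rightarrow> bool" where
  "spec f \<longleftrightarrow> (\<forall>k l. is_index k \<longrightarrow> is_index l \<longrightarrow> f k * f l = sum_list (map f (stuffle k l))) \<and>
     (\<forall>k. admissible k \<longrightarrow> f k = [:mzv k:]) \<and>
     f [1] = [:0, 1:] \<and>
     (\<forall>k. \<not> is_index k \<longrightarrow> f k = 0)"

lemma spec_fz: "spec fz"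
  unfolding spec_def
proof (intro conjI allI impI)
  fix k l :: "nat list" assume ik: "is_index k" and il: "is_index l"
  have "approx (fz k * fz l) (\<lambda>N. Zr k N * Zr l N)"
    by (intro approx_mult fz_approx ik il)
  moreover have "approx (sum_list (map fz (stuffle k l))) (\<lambda>N. sum_list (map (\<lambda>w. Zr w N) (stuffle k l)))"
    by (intro approx_sum_list fz_approx stuffle_index[OF ik il])
  ultimately show "fz k * fz l = sum_list (map fz (stuffle k l))"
    using approx_unique Zr_hom by (metis (no_types, lifting) approx_cong)
next
  fix k assume "admissible k"
  then show "fz k = [:mzv k:]"
    using approx_mzv[of k] by (intro fz_eq) (auto simp: admissible_def Zr_def[abs_def])
next
  show "fz [1] = [:0, 1:]"
  proof (rule fz_eq)
    have "Zr [1] = harm" by (rule ext) (rule Zr_one)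
    then show "approx [:0, 1:] (Zr [1])" using approx_X by simp
  qed (simp add: is_index_def)
next
  fix k assume "\<not> is_index k" then show "fz k = 0" by (simp add: fz_def)
qed

lemma spec_unique:
  assumes g: "spec g" shows "g = fz"
proof -
  have main: "\<forall>k. is_index k \<longrightarrow> trail k \<le> m \<longrightarrow> g k = fz k" for m
  proof (induction m)
    case 0
    show ?case using g spec_fz trail0_admissible unfolding spec_def by auto
  next
    case (Suc m)
    show ?case
    proof (intro allI impI)
      fix k assume ik: "is_index k" and tk: "trail k \<le> Suc m"
      show "g k = fz k"
      proof (cases "trail k \<le> m")
        case True then show ?thesis using Suc.IH ik by blast
      next
        case False
        then have "trail k = Suc m" using tk by simp
        then obtain k0 where k: "k = k0 @ [1]" and t0: "trail k0 = m" using trail_Suc_decomp by blast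
        have ik0: "is_index k0" using ik k by (simp add: is_index_def)
        have i1: "is_index [1::nat]" by (simp add: is_index_def)
        define R where "R = filter (\<lambda>y. y \<noteq> k0 @ [1]) (stuffle k0 [1])"
        define c where "c = count_list (stuffle k0 [1]) (k0 @ [1])"
        have c: "0 < c" unfolding c_def by (intro count_list_pos stuffle_one_mem)
        have R: "\<And>w. w \<in> set R \<Longrightarrow> g w = fz w"
        proof -
          fix w assume w: "w \<in> set R"
          then have "w \<in> set (stuffle k0 [1])" "w \<noteq> k0 @ [1]" by (auto simp: R_def)
          then have "is_index w" "trail w \<le> m"
            using stuffle_index[OF ik0 i1] stuffle_one_trail[OF ik0] t0 by auto
          then show "g w = fz w" using Suc.IH by blast
        qed
        have eq: "f k0 * f [1] = of_nat c * f k + sum_list (map f R)" if "spec f" for f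
        proof -
          have "f k0 * f [1] = sum_list (map f (stuffle k0 [1]))"
            using that ik0 i1 unfolding spec_def by blast
          then show ?thesis using sum_list_count_split[of f "stuffle k0 [1]" "k0 @ [1]"]
            by (simp only: k R_def c_def)
        qed
        have "g k0 = fz k0" using Suc.IH ik0 t0 by blast
        moreover have "g [1] = fz [1]" using g spec_fz by (simp add: spec_def)
        moreover have "sum_list (map g R) = sum_list (map fz R)" using R by (simp cong: map_cong)
        ultimately have "of_nat c * g k = of_nat c * fz k"
          using eq[OF g] eq[OF spec_fz] by simp
        then show ?thesis using c by simp
      qed
    qed
  qed
  show ?thesis
  proof
    fix k show "g k = fz k"
    proof (cases "is_index k")
      case True then show ?thesis using main by blast
    next
      case False then show ?thesis using g spec_fz by (simp add: spec_def)
    qed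
  qed
qed

lemma zeta_star_reg_eq: "zeta_star_reg = fz"
proof -
  have "zeta_star_reg = (THE f. spec f)" unfolding zeta_star_reg_def spec_def by simp
  also have "\<dots> = fz" by (rule the_equality) (auto intro: spec_fz spec_unique)
  finally show ?thesis .
qed



definition Sf :: "nat \<Rightarrow> nat \<Rightarrow> real fps" where
  "Sf a \<nu> = Abs_fps (\<lambda>p. ((- of_nat a :: real) gchoose p) / real \<nu> ^ (a + p))"

lemma Sf_nth: "fps_nth (Sf a \<nu>) p = ((- of_nat a :: real) gchoose p) / real \<nu> ^ (a + p)"
  by (simp add: Sf_def)

lemma Sf_mult: "Sf (a + b) \<nu> = Sf a \<nu> * Sf b \<nu>"
proof (rule fps_ext)
  fix m
  have "fps_nth (Sf a \<nu> * Sf b \<nu>) m = (\<Sum>i=0..m. ((- of_nat a :: real) gchoose i) * ((- of_nat b :: real) gchoose (m - i)) / real \<nu> ^ (a + b + m))"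
    unfolding fps_mult_nth Sf_nth
  proof (intro sum.cong refl)
    fix i assume "i \<in> {0..m}"
    then have "a + i + (b + (m - i)) = a + b + m" by simp
    then have "real \<nu> ^ (a + i) * real \<nu> ^ (b + (m - i)) = real \<nu> ^ (a + b + m)"
      by (metis power_add)
    then show "((- of_nat a :: real) gchoose i) / real \<nu> ^ (a + i) * (((- of_nat b) gchoose (m - i)) / real \<nu> ^ (b + (m - i))) =
          ((- of_nat a) gchoose i) * ((- of_nat b) gchoose (m - i)) / real \<nu> ^ (a + b + m)"
      by (simp add: divide_inverse inverse_mult_distrib[symmetric] mult_ac)
  qed
  also have "\<dots> = ((- of_nat a :: real) + (- of_nat b) gchoose m) / real \<nu> ^ (a + b + m)"
    by (simp add: sum_divide_distrib[symmetric] gbinomial_Vandermonde)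
  also have "\<dots> = fps_nth (Sf (a + b) \<nu>) m" by (simp add: Sf_nth)
  finally show "fps_nth (Sf (a + b) \<nu>) m = fps_nth (Sf a \<nu> * Sf b \<nu>) m" ..
qed

lemma neg_gchoose: "((- of_nat a :: real) gchoose p) = (-1) ^ p * real ((a + p - 1) choose p)"
proof (cases "a + p = 0")
  case True
  then have "a = 0" "p = 0" by auto
  then show ?thesis by simp
next
  case False
  have "((- of_nat a :: real) gchoose p) = (-1) ^ p * ((of_nat p - (- of_nat a) - 1) gchoose p)"
    by (rule gbinomial_negated_upper)
  also have "(of_nat p - (- of_nat a) - 1 :: real) = of_nat (a + p - 1)"
  proof -
    obtain q where q: "a + p = Suc q" using False by (cases "a + p") auto
    then have "real (a + p) = real (Suc q)" by (simp only:)
    then have r: "real a + real p = real q + 1" by (simp only: of_nat_add of_nat_Suc)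
    have "a + p - 1 = q" using q by simp
    then have "real (a + p - 1) = real q" by simp
    then show ?thesis using r by linarith
  qed
  also have "(of_nat (a + p - 1) :: real) gchoose p = real ((a + p - 1) choose p)"
    by (rule binomial_gbinomial[symmetric])
  finally show ?thesis .
qed

definition Cset :: "nat \<Rightarrow> nat \<Rightarrow> nat list set" where
  "Cset r m = {n. length n = r \<and> sum_list n = m}"

lemma finite_Cset: "finite (Cset r m)"
proof -
  have "Cset r m \<subseteq> {n. set n \<subseteq> {0..m} \<and> length n = r}"
    by (auto simp: Cset_def member_le_sum_list)
  then show ?thesis using finite_lists_length_eq[of "{0..m}" r] finite_subset by blast
qed

lemma Cset_0: "Cset 0 m = (if m = 0 then {[]} else {})"
  by (auto simp: Cset_def)

lemma Cset_Suc: "Cset (Suc r) m = (\<Union>p\<in>{0..m}. (#) p ` Cset r (m - p))"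
proof
  show "Cset (Suc r) m \<subseteq> (\<Union>p\<in>{0..m}. (#) p ` Cset r (m - p))"
  proof
    fix n assume "n \<in> Cset (Suc r) m"
    then obtain y ys where n: "n = y # ys" "length ys = r" "y + sum_list ys = m"
      by (auto simp: Cset_def length_Suc_conv)
    then have "ys \<in> Cset r (m - y)" "y \<in> {0..m}" by (auto simp: Cset_def)
    then show "n \<in> (\<Union>p\<in>{0..m}. (#) p ` Cset r (m - p))" using n(1) by (intro UN_I[of y]) auto
  qed
next
  show "(\<Union>p\<in>{0..m}. (#) p ` Cset r (m - p)) \<subseteq> Cset (Suc r) m"
    by (auto simp: Cset_def)
qed

lemma bcoef_Cons: "bcoef (a # w) (p # n) = ((a + p - 1) choose p) * bcoef w n"
  by (simp add: bcoef_def prod.lessThan_Suc_shift del: prod.lessThan_Suc)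

lemma vadd_Cons: "vadd (a # w) (p # n) = (a + p) # vadd w n"
  by (simp add: vadd_def)

lemma coeff_Zs_Sf:
  "fps_nth (Zs Sf N lo w) m = (\<Sum>n\<in>Cset (length w) m. (-1) ^ m * real (bcoef w n) * Zs Sr N lo (vadd w n))"
proof (induction w arbitrary: lo m)
  case Nil then show ?case by (simp add: Cset_0 bcoef_def vadd_def)
next
  case (Cons a w)
  define X where "X = (\<lambda>p n \<nu>. (-1) ^ m * real ((a + p - 1) choose p) * real (bcoef w n) *
      (Sr (a + p) \<nu> * Zs Sr N (Suc \<nu>) (vadd w n)))"
  have "fps_nth (Zs Sf N lo (a # w)) m = (\<Sum>\<nu>\<in>{lo..N}. \<Sum>p=0..m. \<Sum>n\<in>Cset (length w) (m - p). X p n \<nu>)"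
    unfolding Zs.simps fps_sum_nth fps_mult_nth Cons.IH
  proof (intro sum.cong refl)
    fix \<nu> p assume p: "p \<in> {0..m}"
    have e: "(-1::real) ^ p * (-1) ^ (m - p) = (-1) ^ m" using p by (simp add: power_add[symmetric])
    show "fps_nth (Sf a \<nu>) p * (\<Sum>n\<in>Cset (length w) (m - p). (-1) ^ (m - p) * real (bcoef w n) * Zs Sr N (Suc \<nu>) (vadd w n))
       = (\<Sum>n\<in>Cset (length w) (m - p). X p n \<nu>)"
      unfolding sum_distrib_left
    proof (intro sum.cong refl)
      fix n
      have "(-1) ^ p * real ((a + p - 1) choose p) / real \<nu> ^ (a + p) *
         ((-1) ^ (m - p) * real (bcoef w n) * Zs Sr N (Suc \<nu>) (vadd w n)) =
         ((-1::real) ^ p * (-1) ^ (m - p)) * real ((a + p - 1) choose p) * real (bcoef w n) *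
         (1 / real \<nu> ^ (a + p) * Zs Sr N (Suc \<nu>) (vadd w n))"
        by (simp add: divide_inverse mult_ac)
      then show "fps_nth (Sf a \<nu>) p * ((-1) ^ (m - p) * real (bcoef w n) * Zs Sr N (Suc \<nu>) (vadd w n)) = X p n \<nu>"
        unfolding X_def Sf_nth neg_gchoose e by (simp add: Sr_def)
    qed
  qed
  also have "\<dots> = (\<Sum>p=0..m. \<Sum>n\<in>Cset (length w) (m - p). \<Sum>\<nu>\<in>{lo..N}. X p n \<nu>)"
    by (subst sum.swap) (rule sum.cong[OF refl], rule sum.swap)
  also have "\<dots> = (\<Sum>p=0..m. \<Sum>n\<in>Cset (length w) (m - p).
       (-1) ^ m * real (bcoef (a # w) (p # n)) * Zs Sr N lo (vadd (a # w) (p # n)))"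
    by (intro sum.cong refl) (simp add: X_def bcoef_Cons vadd_Cons sum_distrib_left mult_ac)
  also have "\<dots> = (\<Sum>p=0..m. \<Sum>n\<in>(#) p ` Cset (length w) (m - p).
       (-1) ^ m * real (bcoef (a # w) n) * Zs Sr N lo (vadd (a # w) n))"
    by (rule sum.cong[OF refl]) (simp add: sum.reindex)
  also have "\<dots> = (\<Sum>n\<in>Cset (length (a # w)) m. (-1) ^ m * real (bcoef (a # w) n) * Zs Sr N lo (vadd (a # w) n))"
    unfolding length_Cons Cset_Suc
  proof (rule sum.UNION_disjoint[symmetric])
    show "\<forall>i\<in>{0..m}. \<forall>j\<in>{0..m}. i \<noteq> j \<longrightarrow> (#) i ` Cset (length w) (m - i) \<inter> (#) j ` Cset (length w) (m - j) = {}"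
    proof (intro ballI impI)
      fix i j :: nat assume "i \<noteq> j"
      then show "(#) i ` Cset (length w) (m - i) \<inter> (#) j ` Cset (length w) (m - j) = {}"
        by (auto simp only: disjoint_iff image_iff list.inject)
    qed
  next
    show "\<forall>i\<in>{0..m}. finite ((#) i ` Cset (length w) (m - i))" by (simp add: finite_Cset)
  qed simp
  finally show ?case .
qed



lemma approx_poly_const: "(\<And>x. poly p x = c) \<Longrightarrow> approx p (\<lambda>N. c)"
  by (simp add: approx_def E_zero)

definition fapprox :: "real poly fps \<Rightarrow> (nat \<Rightarrow> real fps) \<Rightarrow> bool" where
  "fapprox F G \<longleftrightarrow> (\<forall>m. approx (fps_nth F m) (\<lambda>N. fps_nth (G N) m))"

lemma fapprox_unique: "fapprox F G \<Longrightarrow> fapprox F' G \<Longrightarrow> F = F'"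
  unfolding fapprox_def by (intro fps_ext) (blast intro: approx_unique)

lemma fapprox_add: "fapprox F G \<Longrightarrow> fapprox F' G' \<Longrightarrow> fapprox (F + F') (\<lambda>N. G N + G' N)"
  unfolding fapprox_def by (auto intro: approx_add)

lemma fapprox_mult: "fapprox F G \<Longrightarrow> fapprox F' G' \<Longrightarrow> fapprox (F * F') (\<lambda>N. G N * G' N)"
  unfolding fapprox_def fps_mult_nth
  by (auto intro!: approx_sum approx_mult)

lemma fapprox_sum: "finite A \<Longrightarrow> (\<And>a. a \<in> A \<Longrightarrow> fapprox (F a) (G a)) \<Longrightarrow> fapprox (\<Sum>a\<in>A. F a) (\<lambda>N. \<Sum>a\<in>A. G a N)"
  unfolding fapprox_def fps_sum_nth by (auto intro!: approx_sum)

lemma fapprox_sum_list: "(\<And>a. a \<in> set xs \<Longrightarrow> fapprox (F a) (G a)) \<Longrightarrow> fapprox (sum_list (map F xs)) (\<lambda>N. sum_list (map (\<lambda>a. G a N) xs))"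
proof (induction xs)
  case Nil
  then show ?case unfolding fapprox_def using approx_const[of 0] by simp
next
  case (Cons a xs)
  then show ?case by (simp add: fapprox_add)
qed

lemma fapprox_one: "fapprox 1 (\<lambda>N. 1)"
  unfolding fapprox_def
proof
  fix m
  show "approx (fps_nth 1 m) (\<lambda>N. fps_nth 1 m)"
    by (cases "m = 0") (auto intro: approx_poly_const)
qed

lemma fapprox_zero: "fapprox 0 (\<lambda>N. 0)"
  unfolding fapprox_def using approx_const[of 0] by auto

lemma fapprox_neg: "fapprox F G \<Longrightarrow> fapprox (- F) (\<lambda>N. - G N)"
  unfolding fapprox_def by (auto intro: approx_neg)

lemma fapprox_power_neg1: "fapprox ((-1) ^ i) (\<lambda>N. (-1) ^ i)"
proof (induction i)
  case 0 then show ?case using fapprox_one by simp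
next
  case (Suc i)
  have "fapprox (-1 * (-1) ^ i) (\<lambda>N. -1 * (-1) ^ i)"
    by (intro fapprox_mult fapprox_neg fapprox_one Suc.IH)
  then show ?case by simp
qed


lemma vadd_index: "is_index w \<Longrightarrow> is_index (vadd w n)"
  by (auto simp: is_index_def vadd_def dest: set_zip_leftD)

lemma zeta_shift_fapprox:
  assumes "is_index w"
  shows "fapprox (zeta_shift w) (\<lambda>N. Zs Sf N 1 w)"
  unfolding fapprox_def
proof
  fix m
  have "fps_nth (zeta_shift w) m = (\<Sum>n\<in>Cset (length w) m. of_nat (bcoef w n) * fz (vadd w n) * (-1) ^ m)"
    by (simp add: zeta_shift_def zeta_star_reg_eq Cset_def)
  moreover have "approx (\<Sum>n\<in>Cset (length w) m. of_nat (bcoef w n) * fz (vadd w n) * (-1) ^ m)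
     (\<lambda>N. \<Sum>n\<in>Cset (length w) m. real (bcoef w n) * Zr (vadd w n) N * (-1) ^ m)"
    by (intro approx_sum finite_Cset approx_mult approx_poly_const fz_approx vadd_index assms) simp_all
  ultimately show "approx (fps_nth (zeta_shift w) m) (\<lambda>N. fps_nth (Zs Sf N 1 w) m)"
    by (simp add: coeff_Zs_Sf Zr_def mult_ac)
qed

lemma coarsenings_index: "is_index k \<Longrightarrow> l \<in> set (coarsenings k) \<Longrightarrow> is_index l"
proof (induction k arbitrary: l rule: coarsenings.induct)
  case 1 then show ?case by simp
next
  case (2 a) then show ?case by simp
next
  case (3 a b k)
  have ia: "0 < a" and ibk: "is_index (b # k)" using "3.prems"(1) by (auto simp: is_index_def)
  from "3.prems"(2) obtain l' where l': "l' \<in> set (coarsenings (b # k))"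
    and l: "l = a # l' \<or> l = (a + hd l') # tl l'" by auto
  have il': "is_index l'" using "3.IH" ibk l' by blast
  have "l' \<noteq> []" using coarsenings_nonempty[OF l'] .
  then show ?case using l il' ia by (cases l') (auto simp: is_index_def)
qed

lemma zeta_star_shift_fapprox:
  assumes "is_index w"
  shows "fapprox (zeta_star_shift w) (\<lambda>N. Zw Sf N 1 w)"
proof -
  have "fapprox (zeta_star_shift w) (\<lambda>N. sum_list (map (\<lambda>l. Zs Sf N 1 l) (coarsenings w)))"
    unfolding zeta_star_shift_def
    by (intro fapprox_sum_list zeta_shift_fapprox coarsenings_index[OF assms])
  then show ?thesis using coarsening_identity[of Sf, OF Sf_mult] by (simp add: o_def)
qed

lemma take_drop_index: "is_index k \<Longrightarrow> is_index (rev (take i k)) \<and> is_index (drop i k)"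
  by (auto simp: is_index_def dest: in_set_takeD in_set_dropD)

theorem corollary2p6:
  fixes k :: "nat list"
  assumes "is_index k"
  shows "(\<Sum>i = 0..length k. (-1) ^ i * zeta_shift (rev (take i k)) * zeta_star_shift (drop i k))
           = (if length k = 0 then 1 else 0)"
proof -
  have "fapprox (\<Sum>i = 0..length k. (-1) ^ i * zeta_shift (rev (take i k)) * zeta_star_shift (drop i k))
     (\<lambda>N. \<Sum>i = 0..length k. (-1) ^ i * Zs Sf N 1 (rev (take i k)) * Zw Sf N 1 (drop i k))"
    using take_drop_index[OF assms]
    by (intro fapprox_sum fapprox_mult fapprox_power_neg1 zeta_shift_fapprox zeta_star_shift_fapprox) auto
  moreover have "(\<Sum>i = 0..length k. (-1) ^ i * Zs Sf N 1 (rev (take i k)) * Zw Sf N 1 (drop i k)) =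
      (if length k = 0 then 1 else 0)" for N
  proof (cases "k = []")
    case True then show ?thesis by simp
  next
    case False
    then show ?thesis using antipode_identity[OF False, of Sf N 1] by (simp add: mult.assoc)
  qed
  ultimately have "fapprox (\<Sum>i = 0..length k. (-1) ^ i * zeta_shift (rev (take i k)) * zeta_star_shift (drop i k))
     (\<lambda>N. if length k = 0 then 1 else 0)" by simp
  moreover have "fapprox (if length k = 0 then 1 else 0) (\<lambda>N. if length k = 0 then 1 else 0)"
    using fapprox_one fapprox_zero by simp
  ultimately show ?thesis by (rule fapprox_unique)
qed

end
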